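(* Let $N\ge 1$, $\lambda$ a parameter, and for $x,p\in\mathbb{C}^N$ set $$L_k(x,p;\lambda)=\begin{pmatrix}-x_k & x_k(\lambda+x_k)+e^{p_k}\\ -1 & \lambda+x_k\end{pmatrix},\qquad T_N(x,p;\lambda)=L_N(x,p;\lambda)\cdots L_1(x,p;\lambda).$$ If $\widetilde{x}\in\mathbb{C}^N$ satisfies $e^{p_k}=(\widetilde{x}_k-x_k)(\lambda+x_k-\widetilde{x}_{k-1})$ for $k=1,\dots,N$, with periodic boundary conditions ($\widetilde x_0=\widetilde x_N$, $x_{N+1}=x_1$), then $\prod_{k=1}^N(\lambda+x_{k+1}-\widetilde{x}_k)$ is an eigenvalue of $T_N(x,p;\lambda)$.
   Context: The relation between $(x,p)$ and $\widetilde x$ is the first half of the Bäcklund transformation $F_\lambda$ of the periodic dual Toda lattice $\ddot x_k=\dot x_k(x_{k+1}-2x_k+x_{k-1})$. *)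

theory Defs
  imports Complex_Main "Jordan_Normal_Form.Char_Poly"
begin

text \<open>Lax matrix L_k(x,p;lambda); vectors x, p are indexed 1..N as functions nat => complex.\<close>
definition Lmat :: "(nat \<Rightarrow> complex) \<Rightarrow> (nat \<Rightarrow> complex) \<Rightarrow> complex \<Rightarrow> nat \<Rightarrow> complex mat" where
  "Lmat x p lam k = mat_of_rows_list 2
     [[- x k, x k * (lam + x k) + exp (p k)],
      [-1, lam + x k]]"

fun Tmat :: "(nat \<Rightarrow> complex) \<Rightarrow> (nat \<Rightarrow> complex) \<Rightarrow> complex \<Rightarrow> nat \<Rightarrow> complex mat" where
  "Tmat x p lam 0 = 1\<^sub>m 2"
| "Tmat x p lam (Suc k) = Lmat x p lam (Suc k) * Tmat x p lam k"

end

theory Submission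
  imports Defs
begin

definition vv :: "complex \<Rightarrow> complex vec" where
  "vv a = vec 2 (\<lambda>i. if i = 0 then a else 1)"

lemma Lmat_carrier: "Lmat x p lam k \<in> carrier_mat 2 2"
  unfolding Lmat_def mat_of_rows_list_def by (simp only: mat_carrier numeral_2_eq_2 list.size) simp

lemma Tmat_carrier: "Tmat x p lam k \<in> carrier_mat 2 2"
  proof (induction k)
  case (Suc k) then show ?case using mult_carrier_mat[OF Lmat_carrier Suc.IH] by simp
qed simp

lemma vv_carrier: "vv a \<in> carrier_vec 2"
  by (simp add: vv_def)

lemma step:
  assumes "exp (p k) = (xt k - x k) * (lam + x k - xt (k - 1))"
  shows "Lmat x p lam k *\<^sub>v vv (xt (k - 1)) = (lam + x k - xt (k - 1)) \<cdot>\<^sub>v vv (xt k)"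
proof (rule eq_vecI)
  show "dim_vec (Lmat x p lam k *\<^sub>v vv (xt (k - 1))) = dim_vec ((lam + x k - xt (k - 1)) \<cdot>\<^sub>v vv (xt k))"
    by (simp add: Lmat_def mat_of_rows_list_def vv_def)
next
  fix i assume "i < dim_vec ((lam + x k - xt (k - 1)) \<cdot>\<^sub>v vv (xt k))"
  then have "i < 2" by (simp add: vv_def)
  then have "i = 0 \<or> i = 1" by auto
  then show "(Lmat x p lam k *\<^sub>v vv (xt (k - 1))) $ i = ((lam + x k - xt (k - 1)) \<cdot>\<^sub>v vv (xt k)) $ i"
    by (auto simp: Lmat_def mat_of_rows_list_def vv_def mult_mat_vec_def scalar_prod_def
        row_def assms algebra_simps numeral_2_eq_2)
qed

lemma iter:
  assumes "\<And>k. 1 \<le> k \<Longrightarrow> k \<le> N \<Longrightarrow>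
           exp (p k) = (xt k - x k) * (lam + x k - xt (k - 1))"
  shows "k \<le> N \<Longrightarrow> Tmat x p lam k *\<^sub>v vv (xt 0) = (\<Prod>j=1..k. lam + x j - xt (j - 1)) \<cdot>\<^sub>v vv (xt k)"
proof (induction k)
  case 0
  then show ?case by (simp add: vv_carrier)
next
  case (Suc k)
  have "Tmat x p lam (Suc k) *\<^sub>v vv (xt 0) = Lmat x p lam (Suc k) *\<^sub>v (Tmat x p lam k *\<^sub>v vv (xt 0))"
    by (simp add: assoc_mult_mat_vec[OF Lmat_carrier Tmat_carrier vv_carrier])
  also have "\<dots> = (\<Prod>j=1..k. lam + x j - xt (j - 1)) \<cdot>\<^sub>v (Lmat x p lam (Suc k) *\<^sub>v vv (xt k))"
    using Suc by (simp add: mult_mat_vec[OF Lmat_carrier vv_carrier])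
  also have "\<dots> = (\<Prod>j=1..Suc k. lam + x j - xt (j - 1)) \<cdot>\<^sub>v vv (xt (Suc k))"
    using step[of p "Suc k" xt x lam] assms[of "Suc k"] Suc.prems
    by (simp add: smult_smult_assoc mult.commute)
  finally show ?case .
qed

theorem theorem6:
  fixes N :: nat and lam :: complex and x p xt :: "nat \<Rightarrow> complex"
  assumes "N \<ge> 1"
    and "xt 0 = xt N" and "x (N + 1) = x 1"
    and "\<And>k. 1 \<le> k \<Longrightarrow> k \<le> N \<Longrightarrow>
           exp (p k) = (xt k - x k) * (lam + x k - xt (k - 1))"
  shows "eigenvalue (Tmat x p lam N) (\<Prod>k=1..N. lam + x (k + 1) - xt k)"
proof -
  have prod: "(\<Prod>j=1..N. lam + x j - xt (j - 1)) = (\<Prod>k=1..N. lam + x (k + 1) - xt k)"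
  proof -
    obtain M where M: "N = Suc M" using assms(1) by (cases N) auto
    have "(\<Prod>j=1..N. lam + x j - xt (j - 1)) = (lam + x 1 - xt 0) * (\<Prod>j=Suc 1..N. lam + x j - xt (j - 1))"
      using prod.atLeast_Suc_atMost[OF assms(1), of "\<lambda>j. lam + x j - xt (j - 1)"] by simp
    also have "(\<Prod>j=Suc 1..N. lam + x j - xt (j - 1)) = (\<Prod>k=1..M. lam + x (k + 1) - xt k)"
    proof -
      have "(\<Prod>j=Suc 1..Suc M. lam + x j - xt (j - 1)) = (\<Prod>k=1..M. lam + x (Suc k) - xt (Suc k - 1))"
        by (rule prod.shift_bounds_cl_Suc_ivl)
      then show ?thesis using M by simp
    qed
    also have "(lam + x 1 - xt 0) = lam + x (N+1) - xt N" using assms(2,3) by simp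
    also have "(lam + x (N+1) - xt N) * (\<Prod>k=1..M. lam + x (k + 1) - xt k) = (\<Prod>k=1..N. lam + x (k + 1) - xt k)"
      using M by (simp add: mult.commute)
    finally show ?thesis .
  qed
  have "Tmat x p lam N *\<^sub>v vv (xt 0) = (\<Prod>k=1..N. lam + x (k + 1) - xt k) \<cdot>\<^sub>v vv (xt 0)"
    using iter[of N p xt x lam N, OF assms(4) order_refl] prod assms(2) by simp
  moreover have "vv (xt 0) \<noteq> 0\<^sub>v 2"
  proof
    assume "vv (xt 0) = 0\<^sub>v 2"
    then have "vv (xt 0) $ 1 = 0\<^sub>v 2 $ 1" by simp
    then show False by (simp add: vv_def)
  qed
  ultimately show ?thesis
    unfolding eigenvalue_def eigenvector_def
    using Tmat_carrier[of x p lam N] vv_carrier by (intro exI[of _ "vv (xt 0)"]) auto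
qed

end
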